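(* Let $\alpha:(0,\infty)\to[0,\infty)$ be a differentiable interaction potential and let $F:\mathbb R^6\to(0,\infty)$ be a smooth positive function of $(v,w)\in\mathbb R^3\times\mathbb R^3$ (with enough decay for the integrals below to be defined). For $k=1,2,3$ let $b_k(z)=e_k\times z$ for $z\in\mathbb R^3$ ($e_k$ the standard basis, $\times$ the cross product), and let $\tilde b_k(v,w)=\begin{pmatrix} b_k(v-w)\\ -b_k(v-w)\end{pmatrix}\in\mathbb R^6$; $\nabla$ denotes the gradient in $\mathbb R^6$ and $\nabla_v$ the gradient in the $v$ variables. Define $$D_{par}=\frac12\sum_{i,j=1}^3\iint_{\mathbb R^6}\alpha(|v-w|)\,F\,\big|(\partial_{v_i}+\partial_{w_i})(\tilde b_j\cdot\nabla\log F)\big|^2\,\mathrm{d}w\,\mathrm{d}v,$$ $$D_{sph}=\sum_{i,j=1}^3\iint_{\mathbb R^6}\frac{\alpha(|v-w|)}{2|v-w|^2}\,F\,\big|\tilde b_i\cdot\nabla(\tilde b_j\cdot\nabla\log F)\big|^2\,\mathrm{d}w\,\mathrm{d}v.$$ If $F$ is symmetric, i.e. $F(v,w)=F(w,v)$, then $$D_{par}+D_{sph}\ \ge\ \sum_{i,j=1}^3\iint_{\mathbb R^6}\frac{2\alpha(|v-w|)}{|v-w|^2}\,F\,\big|b_i(v-w)\cdot\nabla_v(\tilde b_j\cdot\nabla\log F)\big|^2\,\mathrm{d}w\,\mathrm{d}v.$$ *)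

theory Defs
  imports "HOL-Analysis.Analysis"
begin

definition dd :: "('a::real_normed_vector \<Rightarrow> real) \<Rightarrow> 'a \<Rightarrow> 'a \<Rightarrow> real" where
  "dd h x u = frechet_derivative h (at x) u"

fun Ck :: "nat \<Rightarrow> ('a::real_normed_vector \<Rightarrow> real) \<Rightarrow> bool" where
  "Ck 0 f = continuous_on UNIV f"
| "Ck (Suc k) f = ((\<forall>x. f differentiable (at x)) \<and> (\<forall>u. Ck k (\<lambda>x. frechet_derivative f (at x) u)))"

definition smooth :: "('a::real_normed_vector \<Rightarrow> real) \<Rightarrow> bool" where
  "smooth f = (\<forall>k. Ck k f)"

definition bk :: "3 \<Rightarrow> real^3 \<Rightarrow> real^3" where
  "bk k z = cross3 (axis k 1) z"

definition bt :: "3 \<Rightarrow> (real^3) \<times> (real^3) \<Rightarrow> (real^3) \<times> (real^3)" where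
  "bt k p = (bk k (fst p - snd p), - bk k (fst p - snd p))"

definition gj :: "((real^3) \<times> (real^3) \<Rightarrow> real) \<Rightarrow> 3 \<Rightarrow> (real^3) \<times> (real^3) \<Rightarrow> real" where
  "gj F j x = dd (\<lambda>y. ln (F y)) x (bt j x)"

definition Dpar :: "(real \<Rightarrow> real) \<Rightarrow> ((real^3) \<times> (real^3) \<Rightarrow> real) \<Rightarrow> ennreal" where
  "Dpar \<alpha> F = (1/2) * (\<Sum>i\<in>UNIV. \<Sum>j\<in>UNIV.
     \<integral>\<^sup>+ v. \<integral>\<^sup>+ w. ennreal (\<alpha> (norm (v - w)) * F (v, w) *
        (dd (gj F j) (v, w) (axis i 1, axis i 1))^2) \<partial>lborel \<partial>lborel)"

definition Dsph :: "(real \<Rightarrow> real) \<Rightarrow> ((real^3) \<times> (real^3) \<Rightarrow> real) \<Rightarrow> ennreal" where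
  "Dsph \<alpha> F = (\<Sum>i\<in>UNIV. \<Sum>j\<in>UNIV.
     \<integral>\<^sup>+ v. \<integral>\<^sup>+ w. ennreal (\<alpha> (norm (v - w)) / (2 * (norm (v - w))^2) * F (v, w) *
        (dd (gj F j) (v, w) (bt i (v, w)))^2) \<partial>lborel \<partial>lborel)"

definition Dv :: "(real \<Rightarrow> real) \<Rightarrow> ((real^3) \<times> (real^3) \<Rightarrow> real) \<Rightarrow> ennreal" where
  "Dv \<alpha> F = (\<Sum>i\<in>UNIV. \<Sum>j\<in>UNIV.
     \<integral>\<^sup>+ v. \<integral>\<^sup>+ w. ennreal (2 * \<alpha> (norm (v - w)) / (norm (v - w))^2 * F (v, w) *
        (dd (gj F j) (v, w) (bk i (v - w), 0))^2) \<partial>lborel \<partial>lborel)"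

end

theory Submission
  imports Defs
begin



lemma dd_ln:
  fixes F :: "'a::real_normed_vector \<Rightarrow> real"
  assumes "F differentiable at x" "F x > 0"
  shows "dd (\<lambda>y. ln (F y)) x u = dd F x u / F x"
proof -
  have "(F has_derivative frechet_derivative F (at x)) (at x)" using assms frechet_derivative_works by blast
  from has_derivative_ln[OF assms(2) this]
  have "((\<lambda>y. ln (F y)) has_derivative (\<lambda>u. frechet_derivative F (at x) u * inverse (F x))) (at x)" .
  from frechet_derivative_at[OF this] show ?thesis unfolding dd_def
    by (metis divide_inverse)
qed

lemma smooth_C2:
  assumes "smooth F"
  shows "\<And>x. F differentiable at x" "\<And>x u. (\<lambda>x. dd F x u) differentiable at x"
  using assms unfolding smooth_def dd_def
  by (metis Ck.simps(2))+

lemma dd_expand: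
  fixes F :: "'a::euclidean_space \<Rightarrow> real"
  assumes "F differentiable at x"
  shows "dd F x u = (\<Sum>b\<in>Basis. (u \<bullet> b) * dd F x b)"
proof -
  have l: "linear (dd F x)" unfolding dd_def using linear_frechet_derivative[OF assms] by simp
  have "dd F x u = dd F x (\<Sum>b\<in>Basis. (u \<bullet> b) *\<^sub>R b)" by (simp add: euclidean_representation)
  also have "\<dots> = (\<Sum>b\<in>Basis. (u \<bullet> b) * dd F x b)"
    using l by (simp add: linear_sum linear_cmul o_def)
  finally show ?thesis .
qed

lemma linear_bk: "linear (bk j)"
proof -
  have "bilinear cross3" by (rule bilinear_cross)
  then show ?thesis unfolding bilinear_def bk_def[abs_def] by blast
qed

lemma linear_bt: "linear (bt j)"
  unfolding bt_def[abs_def]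
  by (rule linearI) (auto simp: linear_diff[OF linear_bk] linear_add[OF linear_bk] linear_cmul[OF linear_bk] algebra_simps)

lemma linear_bt_inner: "linear (\<lambda>x. bt j x \<bullet> b)"
  by (rule linearI) (auto simp: linear_add[OF linear_bt] linear_cmul[OF linear_bt] inner_add_left)

lemma gj_formula:
  assumes "\<And>x. F differentiable at x" "\<And>x. F x > 0"
  shows "gj F j x = (\<Sum>b\<in>Basis. (bt j x \<bullet> b) * dd F x b) / F x"
proof -
  have "gj F j x = dd F x (bt j x) / F x" unfolding gj_def using dd_ln[OF assms(1,2)] by simp
  then show ?thesis using dd_expand[OF assms(1), of x "bt j x"] by simp
qed

lemma gj_diff:
  assumes "smooth F" "\<And>x. F x > 0"
  shows "gj F j differentiable at x"
proof -
  note d = smooth_C2[OF assms(1)]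
  have e: "gj F j = (\<lambda>x. (\<Sum>b\<in>Basis. (bt j x \<bullet> b) * dd F x b) / F x)"
    using gj_formula[OF d(1) assms(2)] by auto
  have "(\<lambda>x. bt j x \<bullet> b) differentiable at x" for b
    using linear_imp_differentiable[OF linear_bt_inner] by blast
  then have "(\<lambda>x. (\<Sum>b\<in>Basis. (bt j x \<bullet> b) * dd F x b)) differentiable at x"
    by (intro differentiable_sum ballI differentiable_mult d(2)) auto
  moreover have "F x \<noteq> 0" using assms(2)[of x] by simp
  ultimately have "(\<lambda>x. (\<Sum>b\<in>Basis. (bt j x \<bullet> b) * dd F x b) / F x) differentiable at x"
    using differentiable_divide d(1) by blast
  then show ?thesis unfolding e .
qed



lemma sym_dd:
  fixes G :: "'a::real_normed_vector \<times> 'a \<Rightarrow> real"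
  assumes "\<And>v w. G (w,v) = G (v,w)" "G differentiable at (w,v)"
  shows "dd G (v,w) (a,b) = dd G (w,v) (b,a)"
proof -
  let ?L = "frechet_derivative G (at (w,v))"
  have dG: "(G has_derivative ?L) (at (w,v))" using assms(2) frechet_derivative_works by blast
  have ds: "((\<lambda>p::'a\<times>'a. (snd p, fst p)) has_derivative (\<lambda>p. (snd p, fst p))) (at (v,w))"
    by (auto intro!: derivative_eq_intros)
  have "((\<lambda>p. G (snd p, fst p)) has_derivative (\<lambda>p. ?L (snd p, fst p))) (at (v,w))"
    using has_derivative_compose[OF ds, of G ?L] dG by simp
  moreover have "(\<lambda>p. G (snd p, fst p)) = G" using assms(1) by auto
  ultimately have "(G has_derivative (\<lambda>p. ?L (snd p, fst p))) (at (v,w))" by simp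
  from frechet_derivative_at[OF this] show ?thesis unfolding dd_def
    by (metis fst_conv snd_conv)
qed

lemma meas_dd:
  fixes G :: "'a::euclidean_space \<Rightarrow> real"
  assumes "\<And>x. G differentiable at x"
  shows "(\<lambda>x. dd G x u) \<in> borel_measurable borel"
proof (rule borel_measurable_LIMSEQ_real)
  fix x :: 'a
  let ?D = "frechet_derivative G (at x)"
  have dG: "(G has_derivative ?D) (at x)" using assms frechet_derivative_works by blast
  have lin: "linear ?D" using has_derivative_linear[OF dG] .
  have dl: "((\<lambda>t::real. x + t *\<^sub>R u) has_derivative (\<lambda>t. t *\<^sub>R u)) (at 0)"
    by (auto intro!: derivative_eq_intros)
  have "((\<lambda>t. G (x + t *\<^sub>R u)) has_derivative (\<lambda>t. ?D (t *\<^sub>R u))) (at 0)"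
    using has_derivative_compose[OF dl, of G ?D] dG by simp
  moreover have "(\<lambda>t. ?D (t *\<^sub>R u)) = (*) (?D u)"
    using linear_cmul[OF lin] by (auto simp: mult.commute)
  ultimately have "((\<lambda>t. G (x + t *\<^sub>R u)) has_field_derivative ?D u) (at 0)"
    by (simp add: has_field_derivative_def)
  then have lim: "((\<lambda>t. (G (x + t *\<^sub>R u) - G x) / t) \<longlongrightarrow> ?D u) (at 0)"
    unfolding has_field_derivative_iff by simp
  have s: "filterlim (\<lambda>n. inverse (real (Suc n))) (at 0) sequentially"
    by (rule filterlim_atI[OF LIMSEQ_inverse_real_of_nat]) auto
  have "((\<lambda>n. (G (x + inverse (real (Suc n)) *\<^sub>R u) - G x) / inverse (real (Suc n))) \<longlongrightarrow> ?D u) sequentially"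
    using filterlim_compose[OF lim s] by simp
  then show "(\<lambda>n. (G (x + inverse (real (Suc n)) *\<^sub>R u) - G x) / inverse (real (Suc n))) \<longlonglongrightarrow> dd G x u"
    unfolding dd_def .
next
  fix n
  have c: "continuous_on UNIV G"
    using assms differentiable_imp_continuous_within continuous_on_eq_continuous_within by blast
  show "(\<lambda>x. (G (x + inverse (real (Suc n)) *\<^sub>R u) - G x) / inverse (real (Suc n))) \<in> borel_measurable borel"
    by (intro borel_measurable_continuous_onI continuous_intros continuous_on_compose2[OF c]) auto
qed



lemma bk_comp:
  "bk i z $ k = (if i = 1 then (if k = 1 then 0 else if k = 2 then - z$3 else z$2)
                else if i = 2 then (if k = 1 then z$3 else if k = 2 then 0 else - z$1)
                else (if k = 1 then - z$2 else if k = 2 then z$1 else 0))"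
  using exhaust_3[of i] exhaust_3[of k]
  by (auto simp: bk_def cross3_def axis_def vector_def)

lemma cross_ineq:
  fixes z :: "real^3" and P :: "3 \<Rightarrow> real"
  shows "(\<Sum>i\<in>UNIV. (\<Sum>k\<in>UNIV. (bk i z)$k * P k)^2) \<le> (norm z)^2 * (\<Sum>k\<in>UNIV. (P k)^2)"
proof -
  have n: "(norm z)^2 = z$1^2 + z$2^2 + z$3^2"
    unfolding power2_norm_eq_inner by (simp add: inner_vec_def sum_3 power2_eq_square)
  have e: "(\<Sum>i\<in>UNIV. (\<Sum>k\<in>UNIV. (bk i z)$k * P k)^2) + (z$1 * P 1 + z$2 * P 2 + z$3 * P 3)^2
     = (norm z)^2 * (\<Sum>k\<in>UNIV. (P k)^2)"
    unfolding n by (simp add: sum_3 bk_comp power2_eq_square algebra_simps)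
  show ?thesis using e by (smt (verit) zero_le_power2)
qed

lemma pair_exp:
  fixes y :: "real^3"
  shows "(y, y) = (\<Sum>k\<in>UNIV. y$k *\<^sub>R (axis k 1, axis k 1))"
  by (simp add: sum_3 vec_eq_iff forall_3 axis_def prod_eq_iff)



lemma key_real:
  fixes al fv r :: real and A A' S T P :: "3 \<Rightarrow> 3 \<Rightarrow> real"
  assumes r: "r > 0" and al: "al \<ge> 0" and fv: "fv \<ge> 0"
    and S: "\<And>i j. S i j = A i j + A' i j" and T: "\<And>i j. T i j = A i j - A' i j"
    and TP: "\<And>j. (\<Sum>i\<in>UNIV. (T i j)^2) \<le> r * (\<Sum>i\<in>UNIV. (P i j)^2)"
  shows "(\<Sum>i\<in>UNIV. \<Sum>j\<in>UNIV. al / r * fv * (A i j)^2) + (\<Sum>i\<in>UNIV. \<Sum>j\<in>UNIV. al / r * fv * (A' i j)^2)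
     \<le> (1/2) * (\<Sum>i\<in>UNIV. \<Sum>j\<in>UNIV. al * fv * (P i j)^2) + (\<Sum>i\<in>UNIV. \<Sum>j\<in>UNIV. al / (2 * r) * fv * (S i j)^2)"
proof -
  define c where "c = al * fv / (2 * r)"
  have c0: "c \<ge> 0" unfolding c_def using r al fv by simp
  have pt: "al/r*fv*(A i j)^2 + al/r*fv*(A' i j)^2 = al/(2*r)*fv*(S i j)^2 + c * (T i j)^2" for i j
    unfolding S T c_def using r by (simp add: field_simps power2_eq_square)
  have e1: "(\<Sum>i\<in>UNIV. \<Sum>j\<in>UNIV. al / r * fv * (A i j)^2) + (\<Sum>i\<in>UNIV. \<Sum>j\<in>UNIV. al / r * fv * (A' i j)^2)
      = (\<Sum>i\<in>UNIV. \<Sum>j\<in>UNIV. al/r*fv*(A i j)^2 + al/r*fv*(A' i j)^2)"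
    by (simp only: sum.distrib)
  also have "\<dots> = (\<Sum>i\<in>UNIV. \<Sum>j\<in>UNIV. al/(2*r)*fv*(S i j)^2 + c * (T i j)^2)"
    by (simp only: pt)
  also have "\<dots> = (\<Sum>i\<in>UNIV. \<Sum>j\<in>UNIV. al/(2*r)*fv*(S i j)^2) + (\<Sum>i\<in>UNIV. \<Sum>j\<in>UNIV. c * (T i j)^2)"
    by (simp only: sum.distrib)
  finally have e1: "(\<Sum>i\<in>UNIV. \<Sum>j\<in>UNIV. al / r * fv * (A i j)^2) + (\<Sum>i\<in>UNIV. \<Sum>j\<in>UNIV. al / r * fv * (A' i j)^2)
      = (\<Sum>i\<in>UNIV. \<Sum>j\<in>UNIV. al/(2*r)*fv*(S i j)^2) + (\<Sum>i\<in>UNIV. \<Sum>j\<in>UNIV. c * (T i j)^2)" .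
  have e2: "(\<Sum>i\<in>UNIV. \<Sum>j\<in>UNIV. c * (T i j)^2) = c * (\<Sum>j\<in>UNIV. \<Sum>i\<in>UNIV. (T i j)^2)"
    by (simp only: sum_distrib_left sum.swap[of "\<lambda>i j. c * (T i j)^2"])
  have e3: "c * (\<Sum>j\<in>UNIV. \<Sum>i\<in>UNIV. (T i j)^2) \<le> c * (\<Sum>j\<in>UNIV. r * (\<Sum>i\<in>UNIV. (P i j)^2))"
    by (intro mult_left_mono sum_mono TP c0)
  have "c * (\<Sum>j\<in>UNIV. r * (\<Sum>i\<in>UNIV. (P i j)^2)) = (\<Sum>j\<in>UNIV. \<Sum>i\<in>UNIV. c * r * (P i j)^2)"
    by (simp only: sum_distrib_left mult.assoc)
  also have "\<dots> = (\<Sum>i\<in>UNIV. \<Sum>j\<in>UNIV. c * r * (P i j)^2)"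
    by (rule sum.swap)
  also have "\<dots> = (\<Sum>i\<in>UNIV. \<Sum>j\<in>UNIV. (1/2) * (al * fv * (P i j)^2))"
    unfolding c_def using r by (intro sum.cong refl) (simp add: field_simps)
  also have "\<dots> = (1/2) * (\<Sum>i\<in>UNIV. \<Sum>j\<in>UNIV. al * fv * (P i j)^2)"
    by (simp only: sum_distrib_left)
  finally have e4: "c * (\<Sum>j\<in>UNIV. r * (\<Sum>i\<in>UNIV. (P i j)^2)) = (1/2) * (\<Sum>i\<in>UNIV. \<Sum>j\<in>UNIV. al * fv * (P i j)^2)" .
  show ?thesis using e1 e2 e3 e4 by linarith
qed


lemma bk_neg: "bk j (w - v) = - bk j (v - w)"
  using linear_neg[OF linear_bk, of j "v - w"] by (simp add: minus_diff_eq)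

lemma lin_dd:
  assumes "G differentiable at x"
  shows "linear (dd G x)"
proof -
  have "dd G x = frechet_derivative G (at x)" by (rule ext) (simp add: dd_def)
  then show ?thesis using linear_frechet_derivative[OF assms] by simp
qed

lemma gj_sym:
  assumes "\<And>x. F differentiable at x" "\<And>x. F x > 0" "\<And>v w. F (v, w) = F (w, v)"
  shows "gj F j (w,v) = gj F j (v,w)"
proof -
  let ?H = "\<lambda>y. ln (F y)"
  have Hd: "?H differentiable at x" for x
    unfolding differentiable_def using has_derivative_ln[of F x, OF assms(2)[of x]] assms(1)[of x] frechet_derivative_works by blast
  have Hs: "\<And>v w. ?H (w,v) = ?H (v,w)" using assms(3) by simp
  have "gj F j (v,w) = dd ?H (v,w) (bk j (v-w), - bk j (v-w))" by (simp add: gj_def bt_def)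
  also have "\<dots> = dd ?H (w,v) (- bk j (v-w), bk j (v-w))" by (rule sym_dd[OF Hs Hd])
  also have "\<dots> = gj F j (w,v)" by (simp add: gj_def bt_def bk_neg[of j w v])
  finally show ?thesis by simp
qed

lemma rels:
  assumes Gd: "\<And>x. G differentiable at x" and Gs: "\<And>v w. G (w,v) = G (v,w)"
  shows "dd G (w,v) (bk i (w-v), 0) = - dd G (v,w) (0, bk i (v-w))"
    and "dd G (v,w) (bt i (v,w)) = dd G (v,w) (bk i (v-w), 0) + dd G (w,v) (bk i (w-v), 0)"
    and "dd G (v,w) (bk i (v-w), 0) - dd G (w,v) (bk i (w-v), 0)
         = (\<Sum>k\<in>UNIV. (bk i (v-w))$k * dd G (v,w) (axis k 1, axis k 1))"
proof -
  have L: "linear (dd G (v,w))" by (rule lin_dd[OF Gd])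
  have r1: "dd G (w,v) (bk i (w-v), 0) = - dd G (v,w) (0, bk i (v-w))"
  proof -
    have "dd G (w,v) (bk i (w-v), 0) = dd G (v,w) (0, bk i (w-v))"
      using sym_dd[OF Gs Gd, of v w 0 "bk i (w-v)"] by simp
    also have "\<dots> = dd G (v,w) (- (0, bk i (v-w)))" by (simp add: bk_neg[of i w v])
    also have "\<dots> = - dd G (v,w) (0, bk i (v-w))" by (rule linear_neg[OF L])
    finally show ?thesis .
  qed
  show "dd G (w,v) (bk i (w-v), 0) = - dd G (v,w) (0, bk i (v-w))" by (rule r1)
  have "dd G (v,w) (bt i (v,w)) = dd G (v,w) ((bk i (v-w), 0) - (0, bk i (v-w)))"
    by (simp add: bt_def)
  also have "\<dots> = dd G (v,w) (bk i (v-w), 0) - dd G (v,w) (0, bk i (v-w))" by (rule linear_diff[OF L])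
  finally show "dd G (v,w) (bt i (v,w)) = dd G (v,w) (bk i (v-w), 0) + dd G (w,v) (bk i (w-v), 0)"
    using r1 by simp
  have "dd G (v,w) (bk i (v-w), 0) - dd G (w,v) (bk i (w-v), 0)
      = dd G (v,w) (bk i (v-w), 0) + dd G (v,w) (0, bk i (v-w))" using r1 by simp
  also have "\<dots> = dd G (v,w) ((bk i (v-w), 0) + (0, bk i (v-w)))" by (rule linear_add[OF L, symmetric])
  also have "\<dots> = dd G (v,w) (\<Sum>k\<in>UNIV. (bk i (v-w))$k *\<^sub>R (axis k 1, axis k 1))"
    using pair_exp[of "bk i (v-w)"] by simp
  also have "\<dots> = (\<Sum>k\<in>UNIV. (bk i (v-w))$k * dd G (v,w) (axis k 1, axis k 1))"
    by (subst linear_sum[OF L]) (simp only: linear_cmul[OF L] o_def real_scaleR_def)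
  finally show "dd G (v,w) (bk i (v-w), 0) - dd G (w,v) (bk i (w-v), 0)
         = (\<Sum>k\<in>UNIV. (bk i (v-w))$k * dd G (v,w) (axis k 1, axis k 1))" .
qed

lemma meas_dd_var:
  fixes G :: "'a::euclidean_space \<Rightarrow> real"
  assumes "\<And>x. G differentiable at x" "continuous_on UNIV u"
  shows "(\<lambda>x. dd G x (u x)) \<in> borel_measurable borel"
proof -
  have "(\<lambda>x. dd G x (u x)) = (\<lambda>x. \<Sum>b\<in>Basis. (u x \<bullet> b) * dd G x b)"
    by (rule ext) (rule dd_expand[OF assms(1)])
  moreover have "(\<lambda>x. \<Sum>b\<in>Basis. (u x \<bullet> b) * dd G x b) \<in> borel_measurable borel"
  proof (intro borel_measurable_sum borel_measurable_times)
    fix b :: 'a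
    show "(\<lambda>x. u x \<bullet> b) \<in> borel_measurable borel"
      by (rule borel_measurable_continuous_onI, rule continuous_on_inner[OF assms(2) continuous_on_const])
    show "(\<lambda>x. dd G x b) \<in> borel_measurable borel" by (rule meas_dd[OF assms(1)])
  qed
  ultimately show ?thesis by simp
qed

lemma iter_eq:
  fixes H :: "('a::euclidean_space \<times> 'b::euclidean_space) \<Rightarrow> ennreal"
  assumes "H \<in> borel_measurable borel"
  shows "(\<integral>\<^sup>+v. \<integral>\<^sup>+w. H (v,w) \<partial>lborel \<partial>lborel) = (\<integral>\<^sup>+p. H p \<partial>lborel)"
proof -
  have "H \<in> borel_measurable (lborel \<Otimes>\<^sub>M lborel)" using assms by (simp add: lborel_prod)
  from lborel.nn_integral_fst[OF this] show ?thesis by (simp add: lborel_prod)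
qed

lemma swap_eq:
  fixes H :: "('a::euclidean_space \<times> 'a) \<Rightarrow> ennreal"
  assumes "H \<in> borel_measurable borel"
  shows "(\<integral>\<^sup>+p. H (snd p, fst p) \<partial>lborel) = (\<integral>\<^sup>+p. H p \<partial>lborel)"
proof -
  have c: "continuous_on UNIV (\<lambda>p::'a\<times>'a. (snd p, fst p))" by (intro continuous_intros)
  have m: "(\<lambda>p::'a\<times>'a. H (snd p, fst p)) \<in> borel_measurable borel"
    using measurable_compose[OF borel_measurable_continuous_onI[OF c] assms] by (simp add: o_def)
  have mH: "H \<in> borel_measurable (lborel \<Otimes>\<^sub>M lborel)" using assms by (simp add: lborel_prod)
  have "(\<integral>\<^sup>+p. H (snd p, fst p) \<partial>lborel) = (\<integral>\<^sup>+v. \<integral>\<^sup>+w. H (w,v) \<partial>lborel \<partial>lborel)"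
    using iter_eq[OF m] by simp
  also have "\<dots> = (\<integral>\<^sup>+w. \<integral>\<^sup>+v. H (w,v) \<partial>lborel \<partial>lborel)"
    by (rule lborel_pair.Fubini[OF mH])
  also have "\<dots> = (\<integral>\<^sup>+p. H p \<partial>lborel)" by (rule iter_eq[OF assms])
  finally show ?thesis .
qed

lemma half_ennreal: "(1/2::ennreal) = ennreal (1/2)"
  by (metis divide_ennreal ennreal_1 ennreal_numeral zero_le_one zero_less_numeral)


lemma lin_cont: "linear f \<Longrightarrow> continuous_on S (f :: 'a::euclidean_space \<Rightarrow> 'b::real_normed_vector)"
  by (rule linear_continuous_on) (simp add: linear_conv_bounded_linear)

lemma linear_bk0: "linear (\<lambda>p::(real^3)\<times>(real^3). (bk i (fst p - snd p), 0::real^3))"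
  by (rule linearI) (auto simp: linear_diff[OF linear_bk] linear_add[OF linear_bk] linear_cmul[OF linear_bk] algebra_simps)

lemma sum2I:
  fixes f :: "'i \<Rightarrow> 'j \<Rightarrow> 'a \<Rightarrow> ennreal"
  assumes "\<And>i j. f i j \<in> borel_measurable M"
  shows "(\<integral>\<^sup>+p. (\<Sum>i\<in>I. \<Sum>j\<in>J. f i j p) \<partial>M) = (\<Sum>i\<in>I. \<Sum>j\<in>J. integral\<^sup>N M (f i j))"
proof -
  have "(\<integral>\<^sup>+p. (\<Sum>i\<in>I. \<Sum>j\<in>J. f i j p) \<partial>M) = (\<Sum>i\<in>I. \<integral>\<^sup>+p. (\<Sum>j\<in>J. f i j p) \<partial>M)"
    by (rule nn_integral_sum) (intro borel_measurable_sum assms)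
  also have "\<dots> = (\<Sum>i\<in>I. \<Sum>j\<in>J. integral\<^sup>N M (f i j))"
    by (intro sum.cong refl nn_integral_sum assms)
  finally show ?thesis .
qed


lemma ennreal_sum2:
  fixes f :: "'i \<Rightarrow> 'j \<Rightarrow> real"
  assumes "\<And>i j. 0 \<le> f i j"
  shows "(\<Sum>i\<in>I. \<Sum>j\<in>J. ennreal (f i j)) = ennreal (\<Sum>i\<in>I. \<Sum>j\<in>J. f i j)"
proof -
  have "(\<Sum>i\<in>I. \<Sum>j\<in>J. ennreal (f i j)) = (\<Sum>i\<in>I. ennreal (\<Sum>j\<in>J. f i j))"
    using assms by (intro sum.cong refl sum_ennreal) auto
  also have "\<dots> = ennreal (\<Sum>i\<in>I. \<Sum>j\<in>J. f i j)"
    using assms by (intro sum_ennreal sum_nonneg) auto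
  finally show ?thesis .
qed



theorem lemma3p3:
  fixes \<alpha> :: "real \<Rightarrow> real" and F :: "(real^3) \<times> (real^3) \<Rightarrow> real"
  assumes "\<alpha> differentiable_on {0<..}"
    and "\<And>t. t > 0 \<Longrightarrow> \<alpha> t \<ge> 0"
    and "smooth F"
    and "\<And>x. F x > 0"
    and "\<And>v w. F (v, w) = F (w, v)"
  shows "Dpar \<alpha> F + Dsph \<alpha> F \<ge> Dv \<alpha> F"
proof -
  note Fd = smooth_C2(1)[OF assms(3)]
  have Gd: "\<And>j x. gj F j differentiable at x" using gj_diff[OF assms(3) assms(4)] by blast
  have Gs: "\<And>j v w. gj F j (w,v) = gj F j (v,w)" using gj_sym[OF Fd assms(4) assms(5)] by blast
  define ap where "ap = (\<lambda>t::real. indicator {0<..} t *\<^sub>R \<alpha> t)"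
  have ap_eq: "\<And>t. ap t = (if t > 0 then \<alpha> t else 0)" by (simp add: ap_def indicator_def)
  have ap_nn: "\<And>t. ap t \<ge> 0" using assms(2) by (simp add: ap_eq)
  have m_ap: "ap \<in> borel_measurable borel"
    unfolding ap_def by (rule borel_measurable_continuous_on_indicator)
      (auto intro: differentiable_imp_continuous_on assms(1))
  define nz where "nz = (\<lambda>p::(real^3)\<times>(real^3). norm (fst p - snd p))"
  have m_nz: "nz \<in> borel_measurable borel"
    unfolding nz_def by (intro borel_measurable_continuous_onI continuous_intros)
  have m_apnz: "(\<lambda>p. ap (nz p)) \<in> borel_measurable borel"
    using measurable_compose[OF m_nz m_ap] by (simp add: o_def)
  have m_F: "F \<in> borel_measurable borel"
    using Fd differentiable_imp_continuous_within continuous_on_eq_continuous_within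
    by (intro borel_measurable_continuous_onI) blast
  have m_A: "\<And>i j. (\<lambda>p. dd (gj F j) p (bk i (fst p - snd p), 0)) \<in> borel_measurable borel"
    by (rule meas_dd_var[OF Gd lin_cont[OF linear_bk0]])
  have m_S: "\<And>i j. (\<lambda>p. dd (gj F j) p (bt i p)) \<in> borel_measurable borel"
    by (rule meas_dd_var[OF Gd lin_cont[OF linear_bt]])
  have m_P: "\<And>i j. (\<lambda>p. dd (gj F j) p (axis i 1, axis i 1)) \<in> borel_measurable borel"
    by (rule meas_dd[OF Gd])
  note [measurable] = m_apnz m_nz m_F m_A m_S m_P
  define a where "a = (\<lambda>i j p. ennreal (ap (nz p) / (nz p)^2 * F p * (dd (gj F j) p (bk i (fst p - snd p), 0))^2))"
  define hv where "hv = (\<lambda>i j p. ennreal (2 * ap (nz p) / (nz p)^2 * F p * (dd (gj F j) p (bk i (fst p - snd p), 0))^2))"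
  define hp where "hp = (\<lambda>i j p. ennreal (ap (nz p) * F p * (dd (gj F j) (p::(real^3)\<times>(real^3)) (axis i 1, axis i 1))^2))"
  define hs where "hs = (\<lambda>i j p. ennreal (ap (nz p) / (2 * (nz p)^2) * F p * (dd (gj F j) p (bt i p))^2))"
  have ma: "\<And>i j. a i j \<in> borel_measurable borel" unfolding a_def by measurable
  have mhv: "\<And>i j. hv i j \<in> borel_measurable borel" unfolding hv_def by measurable
  have mhp: "\<And>i j. hp i j \<in> borel_measurable borel" unfolding hp_def by measurable
  have mhs: "\<And>i j. hs i j \<in> borel_measurable borel" unfolding hs_def by measurable
  have nnA: "\<And>i j p. 0 \<le> ap (nz p) / (nz p)^2 * F p * (dd (gj F j) p (bk i (fst p - snd p), 0))^2"
    using ap_nn assms(4) by (intro mult_nonneg_nonneg divide_nonneg_nonneg) (auto intro: less_imp_le)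
  have pv: "\<And>i j v w. ennreal (2 * \<alpha> (norm (v - w)) / (norm (v - w))^2 * F (v, w) * (dd (gj F j) (v, w) (bk i (v - w), 0))^2) = hv i j (v,w)"
    by (simp add: hv_def nz_def ap_eq)
  have ps: "\<And>i j v w. ennreal (\<alpha> (norm (v - w)) / (2 * (norm (v - w))^2) * F (v, w) * (dd (gj F j) (v, w) (bt i (v, w)))^2) = hs i j (v,w)"
    by (simp add: hs_def nz_def ap_eq)
  have pp: "\<And>i j v w. hp i j (v,w) \<le> ennreal (\<alpha> (norm (v - w)) * F (v, w) * (dd (gj F j) (v, w) (axis i 1, axis i 1))^2)"
    by (simp add: hp_def nz_def ap_eq)
  have Dv1: "Dv \<alpha> F = (\<Sum>i\<in>UNIV. \<Sum>j\<in>UNIV. integral\<^sup>N lborel (hv i j))"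
    unfolding Dv_def pv by (simp only: iter_eq[OF mhv])
  have Ds1: "Dsph \<alpha> F = (\<Sum>i\<in>UNIV. \<Sum>j\<in>UNIV. integral\<^sup>N lborel (hs i j))"
    unfolding Dsph_def ps by (simp only: iter_eq[OF mhs])
  have Dp1: "(1/2) * (\<Sum>i\<in>UNIV. \<Sum>j\<in>UNIV. integral\<^sup>N lborel (hp i j)) \<le> Dpar \<alpha> F"
    unfolding Dpar_def iter_eq[OF mhp, symmetric]
    by (intro mult_left_mono sum_mono nn_integral_mono pp) simp
  define SA where "SA = (\<lambda>p. \<Sum>i\<in>UNIV. \<Sum>j\<in>UNIV. a i j p)"
  have mSA: "SA \<in> borel_measurable borel" unfolding SA_def by (intro borel_measurable_sum ma)
  have mSA': "(\<lambda>p. SA (snd p, fst p)) \<in> borel_measurable borel"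
  proof -
    have c: "continuous_on UNIV (\<lambda>p::(real^3)\<times>(real^3). (snd p, fst p))" by (intro continuous_intros)
    show ?thesis using measurable_compose[OF borel_measurable_continuous_onI[OF c] mSA] by (simp add: o_def)
  qed
  have hv2: "\<And>p. (\<Sum>i\<in>UNIV. \<Sum>j\<in>UNIV. hv i j p) = SA p + SA p"
  proof -
    fix p
    have "\<And>i j. hv i j p = 2 * a i j p"
    proof -
      fix i j
      have "hv i j p = ennreal (2 * (ap (nz p) / (nz p)^2 * F p * (dd (gj F j) p (bk i (fst p - snd p), 0))^2))"
        unfolding hv_def by (simp add: algebra_simps)
      also have "\<dots> = ennreal 2 * a i j p" unfolding a_def by (rule ennreal_mult[OF _ nnA]) simp
      also have "\<dots> = 2 * a i j p" by simp
      finally show "hv i j p = 2 * a i j p" .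
    qed
    then show "(\<Sum>i\<in>UNIV. \<Sum>j\<in>UNIV. hv i j p) = SA p + SA p"
      unfolding SA_def by (simp add: mult_2 sum.distrib)
  qed
  have key: "\<And>p. SA p + SA (snd p, fst p) \<le> (1/2) * (\<Sum>i\<in>UNIV. \<Sum>j\<in>UNIV. hp i j p) + (\<Sum>i\<in>UNIV. \<Sum>j\<in>UNIV. hs i j p)"
  proof -
    fix p :: "(real^3)\<times>(real^3)"
    obtain v w where p: "p = (v,w)" by (cases p)
    show "SA p + SA (snd p, fst p) \<le> (1/2) * (\<Sum>i\<in>UNIV. \<Sum>j\<in>UNIV. hp i j p) + (\<Sum>i\<in>UNIV. \<Sum>j\<in>UNIV. hs i j p)"
    proof (cases "v = w")
      case True
      then have "\<And>i j. a i j p = 0" "\<And>i j. a i j (snd p, fst p) = 0" by (simp_all add: a_def nz_def p)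
      then have "SA p = 0" "SA (snd p, fst p) = 0" by (simp_all add: SA_def)
      then show ?thesis by simp
    next
      case False
      define r where "r = (norm (v - w))^2"
      have r0: "r > 0" using False by (simp add: r_def)
      define al where "al = \<alpha> (norm (v - w))"
      have al0: "al \<ge> 0" using assms(2) False by (simp add: al_def)
      have ap1: "ap (nz (v,w)) = al" "ap (nz (w,v)) = al"
        using False by (simp_all add: ap_eq al_def nz_def norm_minus_commute)
      have nz1: "(nz (v,w))^2 = r" "(nz (w,v))^2 = r" by (simp_all add: nz_def r_def norm_minus_commute)
      define fv where "fv = F (v,w)"
      have fv0: "fv \<ge> 0" using assms(4)[of "(v,w)"] by (simp add: fv_def)
      have fv1: "F (v,w) = fv" "F (w,v) = fv" using assms(5)[of v w] by (simp_all add: fv_def)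
      define A where "A = (\<lambda>i j. dd (gj F j) (v,w) (bk i (v-w), 0))"
      define A' where "A' = (\<lambda>i j. dd (gj F j) (w,v) (bk i (w-v), 0))"
      define S where "S = (\<lambda>i j. dd (gj F j) (v,w) (bt i (v,w)))"
      define T where "T = (\<lambda>i j. A i j - A' i j)"
      define P where "P = (\<lambda>i j. dd (gj F j) (v,w) (axis i 1, axis i 1))"
      have t1: "\<And>i j. a i j (v,w) = ennreal (al / r * fv * (A i j)^2)"
        unfolding a_def A_def by (simp only: ap1 nz1 fv1 fst_conv snd_conv)
      have t2: "\<And>i j. a i j (w,v) = ennreal (al / r * fv * (A' i j)^2)"
        unfolding a_def A'_def by (simp only: ap1 nz1 fv1 fst_conv snd_conv)
      have t3: "\<And>i j. hp i j (v,w) = ennreal (al * fv * (P i j)^2)"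
        unfolding hp_def P_def by (simp only: ap1 nz1 fv1 fst_conv snd_conv)
      have t4: "\<And>i j. hs i j (v,w) = ennreal (al / (2 * r) * fv * (S i j)^2)"
        unfolding hs_def S_def by (simp only: ap1 nz1 fv1 fst_conv snd_conv)
      have Srel: "\<And>i j. S i j = A i j + A' i j"
        unfolding S_def A_def A'_def by (rule rels(2)[OF Gd Gs])
      have TP: "\<And>j. (\<Sum>i\<in>UNIV. (T i j)^2) \<le> r * (\<Sum>i\<in>UNIV. (P i j)^2)"
      proof -
        fix j
        have "\<And>i. T i j = (\<Sum>k\<in>UNIV. (bk i (v-w))$k * P k j)"
          unfolding T_def A_def A'_def P_def by (rule rels(3)[OF Gd Gs])
        then show "(\<Sum>i\<in>UNIV. (T i j)^2) \<le> r * (\<Sum>i\<in>UNIV. (P i j)^2)"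
          using cross_ineq[of "v - w" "\<lambda>k. P k j"] by (simp add: r_def)
      qed
      have Trel: "\<And>i j. T i j = A i j - A' i j" by (simp add: T_def)
      have kr: "(\<Sum>i\<in>UNIV. \<Sum>j\<in>UNIV. al / r * fv * (A i j)^2) + (\<Sum>i\<in>UNIV. \<Sum>j\<in>UNIV. al / r * fv * (A' i j)^2)
        \<le> (1/2) * (\<Sum>i\<in>UNIV. \<Sum>j\<in>UNIV. al * fv * (P i j)^2) + (\<Sum>i\<in>UNIV. \<Sum>j\<in>UNIV. al / (2 * r) * fv * (S i j)^2)"
        by (rule key_real[OF r0 al0 fv0 Srel Trel TP])
      have nn: "\<And>X. 0 \<le> al / r * fv * X^2" "\<And>X. 0 \<le> al * fv * X^2" "\<And>X. 0 \<le> al / (2 * r) * fv * X^2"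
        using al0 fv0 r0 by simp_all
      have L: "SA p + SA (snd p, fst p) = ennreal ((\<Sum>i\<in>UNIV. \<Sum>j\<in>UNIV. al / r * fv * (A i j)^2) + (\<Sum>i\<in>UNIV. \<Sum>j\<in>UNIV. al / r * fv * (A' i j)^2))"
      proof -
        have e1: "(\<Sum>i\<in>UNIV. \<Sum>j\<in>UNIV. ennreal (al / r * fv * (A i j)^2)) = ennreal (\<Sum>i\<in>UNIV. \<Sum>j\<in>UNIV. al / r * fv * (A i j)^2)"
          by (rule ennreal_sum2) (rule nn(1))
        have e2: "(\<Sum>i\<in>UNIV. \<Sum>j\<in>UNIV. ennreal (al / r * fv * (A' i j)^2)) = ennreal (\<Sum>i\<in>UNIV. \<Sum>j\<in>UNIV. al / r * fv * (A' i j)^2)"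
          by (rule ennreal_sum2) (rule nn(1))
        show ?thesis unfolding SA_def p fst_conv snd_conv t1 t2 e1 e2
          by (rule ennreal_plus[symmetric]) (intro sum_nonneg nn(1))+
      qed
      have R: "(1/2) * (\<Sum>i\<in>UNIV. \<Sum>j\<in>UNIV. hp i j p) + (\<Sum>i\<in>UNIV. \<Sum>j\<in>UNIV. hs i j p)
         = ennreal ((1/2) * (\<Sum>i\<in>UNIV. \<Sum>j\<in>UNIV. al * fv * (P i j)^2) + (\<Sum>i\<in>UNIV. \<Sum>j\<in>UNIV. al / (2 * r) * fv * (S i j)^2))"
      proof -
        have e1: "(\<Sum>i\<in>UNIV. \<Sum>j\<in>UNIV. ennreal (al * fv * (P i j)^2)) = ennreal (\<Sum>i\<in>UNIV. \<Sum>j\<in>UNIV. al * fv * (P i j)^2)"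
          by (rule ennreal_sum2) (rule nn(2))
        have e2: "(\<Sum>i\<in>UNIV. \<Sum>j\<in>UNIV. ennreal (al / (2 * r) * fv * (S i j)^2)) = ennreal (\<Sum>i\<in>UNIV. \<Sum>j\<in>UNIV. al / (2 * r) * fv * (S i j)^2)"
          by (rule ennreal_sum2) (rule nn(3))
        have s1: "0 \<le> (\<Sum>i\<in>UNIV. \<Sum>j\<in>UNIV. al * fv * (P i j)^2)" by (intro sum_nonneg nn(2))
        have s2: "0 \<le> (\<Sum>i\<in>UNIV. \<Sum>j\<in>UNIV. al / (2 * r) * fv * (S i j)^2)" by (intro sum_nonneg nn(3))
        have s3: "ennreal (1/2) * ennreal (\<Sum>i\<in>UNIV. \<Sum>j\<in>UNIV. al * fv * (P i j)^2) = ennreal ((1/2) * (\<Sum>i\<in>UNIV. \<Sum>j\<in>UNIV. al * fv * (P i j)^2))"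
          by (rule ennreal_mult[symmetric]) (simp_all add: s1)
        show ?thesis unfolding p t3 t4 e1 e2 half_ennreal s3
          by (rule ennreal_plus[symmetric]) (use s1 s2 in simp_all)
      qed
      show ?thesis unfolding L R by (rule ennreal_leI[OF kr])
    qed
  qed
  have "Dv \<alpha> F = integral\<^sup>N lborel (\<lambda>p. SA p + SA p)"
  proof -
    have "(\<integral>\<^sup>+p. (\<Sum>i\<in>UNIV. \<Sum>j\<in>UNIV. hv i j p) \<partial>lborel) = (\<Sum>i\<in>UNIV. \<Sum>j\<in>UNIV. integral\<^sup>N lborel (hv i j))"
      by (rule sum2I) (use mhv in simp)
    then show ?thesis unfolding Dv1 hv2 by simp
  qed
  also have "\<dots> = integral\<^sup>N lborel SA + integral\<^sup>N lborel SA"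
    by (rule nn_integral_add) (use mSA in simp_all)
  also have "\<dots> = integral\<^sup>N lborel SA + integral\<^sup>N lborel (\<lambda>p. SA (snd p, fst p))"
    using swap_eq[OF mSA] by simp
  also have "\<dots> = integral\<^sup>N lborel (\<lambda>p. SA p + SA (snd p, fst p))"
    by (rule nn_integral_add[symmetric]) (use mSA mSA' in simp_all)
  also have "\<dots> \<le> integral\<^sup>N lborel (\<lambda>p. (1/2) * (\<Sum>i\<in>UNIV. \<Sum>j\<in>UNIV. hp i j p) + (\<Sum>i\<in>UNIV. \<Sum>j\<in>UNIV. hs i j p))"
    by (intro nn_integral_mono key)
  also have "\<dots> = (1/2) * integral\<^sup>N lborel (\<lambda>p. \<Sum>i\<in>UNIV. \<Sum>j\<in>UNIV. hp i j p) + integral\<^sup>N lborel (\<lambda>p. \<Sum>i\<in>UNIV. \<Sum>j\<in>UNIV. hs i j p)"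
    apply (subst nn_integral_add)
      apply (use mhp mhs in \<open>simp_all add: borel_measurable_sum\<close>)
    apply (subst nn_integral_cmult)
     apply (use mhp in \<open>simp_all add: borel_measurable_sum\<close>)
    done
  also have "\<dots> = (1/2) * (\<Sum>i\<in>UNIV. \<Sum>j\<in>UNIV. integral\<^sup>N lborel (hp i j)) + Dsph \<alpha> F"
  proof -
    have e1: "(\<integral>\<^sup>+p. (\<Sum>i\<in>UNIV. \<Sum>j\<in>UNIV. hp i j p) \<partial>lborel) = (\<Sum>i\<in>UNIV. \<Sum>j\<in>UNIV. integral\<^sup>N lborel (hp i j))"
      by (rule sum2I) (use mhp in simp)
    have e2: "(\<integral>\<^sup>+p. (\<Sum>i\<in>UNIV. \<Sum>j\<in>UNIV. hs i j p) \<partial>lborel) = (\<Sum>i\<in>UNIV. \<Sum>j\<in>UNIV. integral\<^sup>N lborel (hs i j))"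
      by (rule sum2I) (use mhs in simp)
    show ?thesis unfolding Ds1 e1 e2 ..
  qed
  also have "\<dots> \<le> Dpar \<alpha> F + Dsph \<alpha> F"
    using Dp1 by (rule add_right_mono)
  finally show ?thesis .
qed

end
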